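(* Let $x>0$ and $v\ge0$. Then $\delta(x,v)\ge h(x,v)$, where $$h(x,v)=\begin{cases}\dfrac{12x}{\pi^2(v+\sqrt v+1)}, & 0<x\le\frac{\pi^3}{12}(v+\sqrt v+1),\\[2mm] 2\pi-\Big[\dfrac{\pi^8(v+\sqrt v+1)}{12x}\Big]^{1/5}, & \frac{\pi^3}{12}(v+\sqrt v+1)\le x<\infty.\end{cases}$$
   Context: For $v\ge0$ and $0<|\delta|<2\pi$ let $f(v,\delta)=\frac{(v+1)(\delta-\sin\delta)+2\sqrt v(2\sin\frac\delta2-\delta\cos\frac\delta2)}{2\sin^2\frac\delta2}$ (nonnegative square root), and $f(v,0)=0$. For $x\in\mathbb{R}$, $v\ge0$, $\delta(x,v)$ denotes the unique $\delta\in(-2\pi,2\pi)$ with $f(v,\delta)=x$. *)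

theory Defs
  imports "HOL-Analysis.Analysis"
begin

definition f_fun :: "real \<Rightarrow> real \<Rightarrow> real" where
  "f_fun v \<delta> = (if \<delta> = 0 then 0 else
     ((v + 1) * (\<delta> - sin \<delta>) + 2 * sqrt v * (2 * sin (\<delta>/2) - \<delta> * cos (\<delta>/2)))
       / (2 * (sin (\<delta>/2))^2))"

definition delta_fun :: "real \<Rightarrow> real \<Rightarrow> real" where
  "delta_fun x v = (THE \<delta>. -2*pi < \<delta> \<and> \<delta> < 2*pi \<and> f_fun v \<delta> = x)"

definition h_fun :: "real \<Rightarrow> real \<Rightarrow> real" where
  "h_fun x v = (if x \<le> pi^3 / 12 * (v + sqrt v + 1)
      then 12 * x / (pi^2 * (v + sqrt v + 1))
      else 2*pi - root 5 (pi^8 * (v + sqrt v + 1) / (12 * x)))"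

end

theory Submission imports Defs begin

lemma g_pos: fixes a :: real assumes "0 < a" "a < pi" shows "sin a - a * cos a > 0"
proof -
  have "(\<lambda>t. sin t - t*cos t) 0 < (\<lambda>t. sin t - t * cos t) a"
  proof (rule DERIV_pos_imp_increasing_open[OF assms(1)])
    fix t assume t: "0 < t" "t < a"
    show "\<exists>y. ((\<lambda>t. sin t - t*cos t) has_real_derivative y) (at t) \<and> 0 < y"
      using t assms by (intro exI[of _ "t* sin t"]) (auto intro!: derivative_eq_intros sin_gt_zero mult_pos_pos)
  qed (intro continuous_intros)
  then show ?thesis by simp
qed

lemma g_le: fixes a :: real assumes "0 \<le> a" shows "sin a - a * cos a \<le> a^3/3"
proof -
  have "(\<lambda>t. t^3/3 - sin t + t*cos t) 0 \<le> (\<lambda>t. t^3/3 - sin t + t * cos t) a"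
  proof (rule DERIV_nonneg_imp_nondecreasing[OF assms])
    fix t assume t: "0 \<le> t" "t \<le> a"
    have "t * sin t \<le> t * t" using sin_x_le_x[OF t(1)] t(1) by (simp add: mult_left_mono)
    then show "\<exists>y. ((\<lambda>t. t^3/3 - sin t + t*cos t) has_real_derivative y) (at t) \<and> 0 \<le> y"
      by (intro exI[of _ "t^2 - t* sin t"]) (auto intro!: derivative_eq_intros simp: power2_eq_square)
  qed
  then show ?thesis by simp
qed

lemma jordan: fixes x :: real assumes "0 < x" "x \<le> pi/2" shows "2*x/pi \<le> sin x"
proof -
  have "(\<lambda>t. - sin t / t) x \<le> (\<lambda>t. - sin t / t) (pi/2)"
  proof (rule DERIV_nonneg_imp_nondecreasing[OF assms(2)])
    fix t assume t: "x \<le> t" "t \<le> pi/2"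
    have "t > 0" using t assms by simp
    have "0 < sin t - t * cos t" using g_pos[of t] t assms pi_gt_zero by linarith
    then show "\<exists>y. ((\<lambda>t. - sin t / t) has_real_derivative y) (at t) \<and> 0 \<le> y"
      using \<open>t > 0\<close>
      by (intro exI[of _ "(sin t - t * cos t)/t^2"]) (auto intro!: derivative_eq_intros simp: power2_eq_square field_simps)
  qed
  then have "2/pi \<le> sin x / x" by simp
  then show ?thesis using assms by (simp add: field_simps)
qed

lemma cos_le: fixes b :: real assumes "0 \<le> b" "b \<le> pi/2" shows "cos b \<le> pi/2 - b"
proof -
  have "cos b = sin (pi/2 - b)" by (simp add: sin_cos_eq)
  also have "\<dots> \<le> pi/2 - b" using assms by (intro sin_x_le_x) simp
  finally show ?thesis .
qed

definition Aa :: "real \<Rightarrow> real" where "Aa t = (t - sin t * cos t) / (sin t)^2"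
definition Ba :: "real \<Rightarrow> real" where "Ba t = (sin t - t * cos t) / (sin t)^2"

lemma Aa_deriv: assumes "sin t \<noteq> 0" shows "DERIV Aa t :> 2*(sin t - t*cos t)/(sin t)^3"
proof -
  have "DERIV Aa t :> ((1 - (cos t * cos t - sin t * sin t)) * (sin t)^2 - (t - sin t * cos t) * (2 * sin t * cos t)) / ((sin t)^2 * (sin t)^2)"
    unfolding Aa_def using assms
    by (auto intro!: derivative_eq_intros simp: power2_eq_square)
  moreover have "(1 - (cos t * cos t - sin t * sin t)) * (sin t)^2 - (t - sin t * cos t) * (2 * sin t * cos t) = 2* sin t*(sin t - t*cos t)"
    using sin_cos_squared_add[of t] by algebra
  moreover have "2* sin t*(sin t - t*cos t) / ((sin t)^2 * (sin t)^2) = 2*(sin t - t*cos t)/(sin t)^3"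
    using assms by (simp add: field_simps power2_eq_square power3_eq_cube)
  ultimately show ?thesis by simp
qed

lemma p1: fixes w u :: real assumes "0 \<le> w" "w \<le> u"
  shows "(3*u - 2*w) * w^3 \<le> u^4"
proof -
  have id: "u^4 - (3*u - 2*w) * w^3 = (u - w) * (u^3 + u^2*w + u*w^2 - 2*w^3)" by algebra
  have "w^3 \<le> u^3" using assms by (simp add: power_mono)
  moreover have "w^3 \<le> u^2*w" using assms by (simp add: power3_eq_cube power2_eq_square mult_right_mono mult_mono)
  moreover have "w^3 \<le> u*w^2" using assms mult_right_mono[of w u "w*w"] by (simp add: power3_eq_cube power2_eq_square mult.assoc)
  moreover have "0 \<le> w^3" using assms by simp
  ultimately have "0 \<le> u^3 + u^2*w + u*w^2 - 2*w^3" by linarith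
  then have "0 \<le> (u - w) * (u^3 + u^2*w + u*w^2 - 2*w^3)" using assms by simp
  then show ?thesis using id by simp
qed

lemma p2: fixes w u :: real assumes "0 \<le> w" "w \<le> u" "u^2 \<le> 3"
  shows "(1 + (2*u - w)*(u - w)) * w^3 \<le> u^3"
proof -
  have id: "u^3 - (1 + (2*u - w)*(u - w)) * w^3 = (u - w) * (u^2 + u*w + w^2 - (2*u - w)*w^3)" by algebra
  have a0: "u^2 - (2*u - w)*w = (u-w)^2" by algebra
  have a: "(2*u - w)*w \<le> u^2" using a0 zero_le_power2[of "u-w"] by linarith
  have "(2*u - w)*w^3 = ((2*u - w)*w) * w^2" by (simp add: power2_eq_square power3_eq_cube)
  also have "\<dots> \<le> u^2 * w^2" using a by (simp add: mult_right_mono)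
  also have "\<dots> = (u*w) * (u*w)" by (simp add: power2_eq_square)
  also have "\<dots> \<le> 3 * (u*w)"
  proof -
    have "u*w \<le> u*u" using assms by (simp add: mult_left_mono)
    then have "u*w \<le> 3" using assms(3) by (simp add: power2_eq_square)
    then show ?thesis using assms by (simp add: mult_right_mono)
  qed
  also have "\<dots> \<le> u^2 + u*w + w^2" using power2_diff[of u w] zero_le_square[of "u-w"] by (simp add: power2_eq_square) 
  finally have "0 \<le> (u - w) * (u^2 + u*w + w^2 - (2*u - w)*w^3)" using assms by simp
  then show ?thesis using id by simp
qed

lemma Ba_deriv: assumes "sin t \<noteq> 0" shows "DERIV Ba t :> (t*(1 + (cos t)^2) - 2 * sin t * cos t)/(sin t)^3"
proof -
  have "DERIV Ba t :> ((cos t - (cos t - t * sin t)) * (sin t)^2 - (sin t - t * cos t) * (2 * sin t * cos t)) / ((sin t)^2 * (sin t)^2)"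
    unfolding Ba_def using assms
    by (auto intro!: derivative_eq_intros simp: power2_eq_square)
  moreover have "(cos t - (cos t - t * sin t)) * (sin t)^2 - (sin t - t * cos t) * (2 * sin t * cos t) = sin t * (t*(1 + (cos t)^2) - 2 * sin t * cos t)"
    using sin_cos_squared_add[of t] by algebra
  moreover have "sin t * (t*(1 + (cos t)^2) - 2 * sin t * cos t) / ((sin t)^2 * (sin t)^2) = (t*(1 + (cos t)^2) - 2 * sin t * cos t)/(sin t)^3"
    using assms by (simp add: field_simps power2_eq_square power3_eq_cube)
  ultimately show ?thesis by simp
qed

lemma cos_ne1: fixes t :: real assumes "0 < t" "t < pi" shows "cos t \<noteq> 1"
proof
  assume "cos t = 1"
  then have "(sin t)^2 = 0" using sin_cos_squared_add[of t] by simp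
  then show False using sin_gt_zero[OF assms] by simp
qed

lemma Bnum_pos: fixes t :: real assumes "0 < t" "t < pi" shows "t*(1 + (cos t)^2) - 2 * sin t * cos t > 0"
proof (cases "cos t \<le> 0")
  case True
  have "sin t * cos t \<le> 0" using True sin_gt_zero[OF assms] by (simp add: mult_nonneg_nonpos)
  moreover have "t*(1 + (cos t)^2) > 0" using assms by (simp add: add_pos_nonneg)
  ultimately show ?thesis by linarith
next
  case False
  have "sin t \<le> t" using sin_x_le_x assms by simp
  then have "2 * sin t * cos t \<le> 2 * t * cos t" using False by (simp add: mult_right_mono)
  moreover have "t * (1 - cos t)^2 > 0" using cos_ne1[OF assms] assms by simp
  ultimately show ?thesis by (simp add: power2_eq_square algebra_simps)
qed

lemma Aa_mono: assumes "0 < a" "a < b" "b < pi" shows "Aa a < Aa b"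
proof (rule DERIV_pos_imp_increasing[OF assms(2)])
  fix t assume t: "a \<le> t" "t \<le> b"
  then have t': "0 < t" "t < pi" using assms by auto
  have "sin t > 0" using sin_gt_zero[OF t'] .
  moreover have "sin t - t * cos t > 0" using g_pos[OF t'] .
  ultimately show "\<exists>y. DERIV Aa t :> y \<and> 0 < y"
    by (intro exI[of _ "2*(sin t - t*cos t)/(sin t)^3"] conjI Aa_deriv) simp_all
qed

lemma Ba_mono: assumes "0 < a" "a < b" "b < pi" shows "Ba a < Ba b"
proof (rule DERIV_pos_imp_increasing[OF assms(2)])
  fix t assume t: "a \<le> t" "t \<le> b"
  then have t': "0 < t" "t < pi" using assms by auto
  have "sin t > 0" using sin_gt_zero[OF t'] .
  moreover have "t*(1 + (cos t)^2) - 2 * sin t * cos t > 0" using Bnum_pos[OF t'] .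
  ultimately show "\<exists>y. DERIV Ba t :> y \<and> 0 < y"
    by (intro exI[of _ "(t*(1 + (cos t)^2) - 2 * sin t * cos t)/(sin t)^3"] conjI Ba_deriv) simp_all
qed

lemma Aa_pos: fixes t :: real assumes "0 < t" "t < pi" shows "Aa t > 0"
proof -
  have s: "sin t > 0" using sin_gt_zero[OF assms] .
  have "sin t * cos t < t"
  proof (cases "cos t \<le> 0")
    case True
    have "sin t * cos t \<le> 0" using True s by (simp add: mult_nonneg_nonpos)
    then show ?thesis using assms by linarith
  next
    case False
    have "cos t < 1" using cos_ne1[OF assms] cos_le_one[of t] by linarith
    then have "sin t * cos t < sin t" using s by simp
    then show ?thesis using sin_x_le_x[of t] assms by simp
  qed
  then show ?thesis unfolding Aa_def using s by simp
qed

lemma Ba_pos: fixes t :: real assumes "0 < t" "t < pi" shows "Ba t > 0"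
  unfolding Ba_def using g_pos[OF assms] sin_gt_zero[OF assms] by simp

lemma f_eq: fixes a v :: real assumes "0 < a" "a < pi"
  shows "f_fun v (2*a) = (v+1) * Aa a + 2 * sqrt v * Ba a"
proof -
  have s: "sin a \<noteq> 0" using sin_gt_zero[OF assms] by simp
  show ?thesis unfolding f_fun_def Aa_def Ba_def sin_double using assms s
    by (simp add: field_simps power2_eq_square)
qed


lemma pi_sq_ge: "9 \<le> pi^2"
proof -
  have "3*3 \<le> pi*pi" using pi_gt3 by (intro mult_mono) auto
  then show ?thesis by (simp add: power2_eq_square)
qed

lemma case1A: fixes a :: real assumes "0 < a" "a \<le> pi/2" shows "Aa a \<le> pi^2*a/6"
proof -
  have a': "a < pi" using assms pi_gt_zero by linarith
  have c: "0 \<le> cos a" using assms by (intro cos_ge_zero) auto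
  have s: "sin a > 0" using sin_gt_zero[OF assms(1) a'] .
  have g: "a * cos a - sin a < 0" using g_pos[OF assms(1) a'] by simp
  have "cos a * (a * cos a - sin a) \<le> 0" using c g by (simp add: mult_nonneg_nonpos)
  then have h1: "a*(cos a)^2 \<le> sin a * cos a" by (simp add: algebra_simps power2_eq_square)
  have e: "a*(cos a)^2 = a - a*(sin a)^2" using sin_cos_squared_add[of a] by algebra
  have "a - sin a * cos a \<le> a * (sin a)^2" using h1 e by linarith
  then have "Aa a \<le> a" unfolding Aa_def using s by (simp add: divide_le_eq)
  also have "a \<le> pi^2*a/6" using pi_sq_ge assms by (simp add: field_simps)
  finally show ?thesis .
qed

lemma case1B: fixes a :: real assumes "0 < a" "a \<le> pi/2" shows "2 * Ba a \<le> pi^2*a/6"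
proof -
  have a': "a < pi" using assms pi_gt_zero by linarith
  have s: "sin a > 0" using sin_gt_zero[OF assms(1) a'] .
  have j: "2*a/pi \<le> sin a" using jordan[OF assms] .
  have j0: "0 < 2*a/pi" using assms by simp
  have j2: "(2*a/pi)^2 \<le> (sin a)^2" using j j0 by (intro power_mono) auto
  have "Ba a \<le> (a^3/3) / (sin a)^2" unfolding Ba_def using g_le[of a] assms s
    by (intro divide_right_mono) auto
  also have "\<dots> \<le> (a^3/3) / (2*a/pi)^2" using j2 j0 assms s
    by (intro divide_left_mono) auto
  also have "\<dots> = pi^2*a/12" using assms by (simp add: field_simps power2_eq_square power3_eq_cube)
  finally show ?thesis by simp
qed

lemma case2A: fixes b :: real assumes "0 < b" "b \<le> pi/2" shows "Aa (pi - b) \<le> pi^8/(384*b^5)"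
proof -
  have b': "b < pi" using assms pi_gt_zero by linarith
  have c: "0 \<le> cos b" using assms by (intro cos_ge_zero) auto
  have s: "sin b > 0" using sin_gt_zero[OF assms(1) b'] .
  have j: "2*b/pi \<le> sin b" using jordan[OF assms] .
  have j0: "0 < 2*b/pi" using assms by simp
  have j2: "(2*b/pi)^2 \<le> (sin b)^2" using j j0 by (intro power_mono) auto
  have sc: "sin b * cos b \<le> cos b" using mult_right_mono[of "sin b" 1 "cos b"] c sin_le_one[of b] by simp
  have N: "pi - b + sin b * cos b \<le> 3*pi/2 - 2*b" using sc cos_le[of b] assms by simp
  have N0: "0 \<le> pi - b + sin b * cos b" using s c b' mult_nonneg_nonneg[of "sin b" "cos b"] by linarith
  have "Aa (pi - b) = (pi - b + sin b * cos b) / (sin b)^2" unfolding Aa_def by simp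
  also have "\<dots> \<le> (3*pi/2 - 2*b) / (sin b)^2" using N by (intro divide_right_mono) auto
  also have "\<dots> \<le> (3*pi/2 - 2*b) / (2*b/pi)^2" proof (intro divide_left_mono j2)
    show "0 \<le> 3*pi/2 - 2*b" using N N0 by linarith
    show "0 < (sin b)^2 * (2*b/pi)^2" using s j0 by (intro mult_pos_pos) auto
  qed
  also have "\<dots> \<le> pi^8/(384*b^5)"
  proof -
    have P: "(3*(pi/2) - 2*b) * b^3 \<le> (pi/2)^4" using p1[of b "pi/2"] assms by simp
    have "(3*pi/2 - 2*b) * b^3 * 96 \<le> pi^4 * 6" using P by (simp add: power4_eq_xxxx field_simps)
    also have "\<dots> \<le> pi^4 * pi^2" using pi_sq_ge by (intro mult_left_mono) auto
    finally have Q: "(3*pi/2 - 2*b) * b^3 * 96 \<le> pi^6" by (simp add: power_add[symmetric])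
    have "(3*pi/2 - 2*b) / (2*b/pi)^2 = ((3*pi/2 - 2*b) * b^3 * 96) * pi^2 / (384*b^5)"
      using assms pi_gt_zero by (simp add: field_simps power2_eq_square power3_eq_cube eval_nat_numeral)
    also have "\<dots> \<le> pi^6 * pi^2 / (384*b^5)" using Q assms
      by (intro divide_right_mono mult_right_mono) auto
    also have "\<dots> = pi^8/(384*b^5)" by (simp add: power_add[symmetric])
    finally show ?thesis .
  qed
  finally show ?thesis .
qed


lemma case2B: fixes b :: real assumes "0 < b" "b \<le> pi/2" shows "2 * Ba (pi - b) \<le> pi^8/(384*b^5)"
proof -
  have b': "b < pi" using assms pi_gt_zero by linarith
  have c: "0 \<le> cos b" using assms by (intro cos_ge_zero) auto
  have s: "sin b > 0" using sin_gt_zero[OF assms(1) b'] .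
  have j: "2*b/pi \<le> sin b" using jordan[OF assms] .
  have j0: "0 < 2*b/pi" using assms by simp
  have j2: "(2*b/pi)^2 \<le> (sin b)^2" using j j0 by (intro power_mono) auto
  define M where "M = 1 + (pi - b)*(pi/2 - b)"
  have pc: "(pi - b) * cos b \<le> (pi - b) * (pi/2 - b)" using cos_le[of b] assms b'
    by (intro mult_left_mono) auto
  have N: "sin b + (pi - b) * cos b \<le> M" unfolding M_def using pc sin_le_one[of b] by linarith
  have N0: "0 \<le> sin b + (pi - b) * cos b" using s c b' mult_nonneg_nonneg[of "pi - b" "cos b"] by linarith
  have "2 * Ba (pi - b) = 2 * ((sin b + (pi - b) * cos b) / (sin b)^2)" unfolding Ba_def by simp
  also have "\<dots> \<le> 2 * (M / (sin b)^2)" using N by (intro mult_left_mono divide_right_mono) auto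
  also have "\<dots> \<le> 2 * (M / (2*b/pi)^2)"
  proof (intro mult_left_mono divide_left_mono j2)
    show "0 \<le> M" using N N0 by linarith
    show "0 < (sin b)^2 * (2*b/pi)^2" using s j0 by (intro mult_pos_pos) auto
  qed simp
  also have "\<dots> \<le> pi^8/(384*b^5)"
  proof -
    have "pi^2 \<le> 3.1416^2" using pi_approx(2) pi_gt_zero by (intro power_mono) auto
    then have pi2: "(pi/2)^2 \<le> 3" by (simp add: power_divide)
    have P: "(1 + (2*(pi/2) - b)*(pi/2 - b)) * b^3 \<le> (pi/2)^3" using p2[of b "pi/2"] assms pi2 by simp
    then have "M * b^3 * 192 \<le> pi^3 * 24" unfolding M_def by (simp add: power3_eq_cube field_simps)
    also have "\<dots> \<le> pi^3 * pi^3"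
    proof -
      have "3^3 \<le> pi^3" using pi_gt3 by (intro power_mono) auto
      then show ?thesis by (intro mult_left_mono) auto
    qed
    finally have Q: "M * b^3 * 192 \<le> pi^6" by (simp add: power_add[symmetric])
    have "2 * (M / (2*b/pi)^2) = (M * b^3 * 192) * pi^2 / (384*b^5)"
      using assms pi_gt_zero by (simp add: field_simps power2_eq_square power3_eq_cube eval_nat_numeral)
    also have "\<dots> \<le> pi^6 * pi^2 / (384*b^5)" using Q assms
      by (intro divide_right_mono mult_right_mono) auto
    also have "\<dots> = pi^8/(384*b^5)" by (simp add: power_add[symmetric])
    finally show ?thesis .
  qed
  finally show ?thesis .
qed


lemma f_d: fixes d v :: real assumes "0 < d" "d < 2*pi"
  shows "f_fun v d = (v+1) * Aa (d/2) + 2 * sqrt v * Ba (d/2)"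
  using f_eq[of "d/2" v] assms by simp

lemma f_mono: fixes v :: real assumes "0 \<le> v" "0 < d1" "d1 < d2" "d2 < 2*pi"
  shows "f_fun v d1 < f_fun v d2"
proof -
  have A: "Aa (d1/2) < Aa (d2/2)" using assms by (intro Aa_mono) auto
  have B: "Ba (d1/2) < Ba (d2/2)" using assms by (intro Ba_mono) auto
  have "(v+1) * Aa (d1/2) < (v+1) * Aa (d2/2)" using A assms by simp
  moreover have "2 * sqrt v * Ba (d1/2) \<le> 2 * sqrt v * Ba (d2/2)" using B assms by (intro mult_left_mono) auto
  moreover have "f_fun v d1 = (v+1) * Aa (d1/2) + 2 * sqrt v * Ba (d1/2)" using f_d[of d1 v] assms by simp
  moreover have "f_fun v d2 = (v+1) * Aa (d2/2) + 2 * sqrt v * Ba (d2/2)" using f_d[of d2 v] assms by simp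
  ultimately show ?thesis by linarith
qed

lemma f_pos: fixes v :: real assumes "0 \<le> v" "0 < d" "d < 2*pi" shows "f_fun v d > 0"
proof -
  have A: "Aa (d/2) > 0" using assms by (intro Aa_pos) auto
  have B: "Ba (d/2) > 0" using assms by (intro Ba_pos) auto
  have "(v+1) * Aa (d/2) > 0" using A assms by simp
  moreover have "2 * sqrt v * Ba (d/2) \<ge> 0" using B assms by simp
  ultimately show ?thesis using f_d[of d v] assms by simp
qed

lemma f_odd: "f_fun v (-d) = - f_fun v d"
proof (cases "d = 0")
  case True then show ?thesis by (simp add: f_fun_def)
next
  case False
  have neg: "-d \<noteq> 0" using False by simp
  have e1: "sin (-d/2) = - sin (d/2)" by (simp only: minus_divide_left[symmetric] sin_minus)
  have e2: "cos (-d/2) = cos (d/2)" by (simp only: minus_divide_left[symmetric] cos_minus)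
  let ?N = "(v + 1) * (d - sin d) + 2 * sqrt v * (2 * sin (d/2) - d * cos (d/2))"
  let ?D = "2 * (sin (d/2))^2"
  have "f_fun v (-d) = ((v + 1) * (-d - sin (-d)) + 2 * sqrt v * (2 * sin (-d/2) - (-d) * cos (-d/2))) / (2 * (sin (-d/2))^2)"
    by (simp only: f_fun_def if_not_P[OF neg])
  also have "\<dots> = ((v + 1) * (-d - - sin d) + 2 * sqrt v * (2 * (- sin (d/2)) - (-d) * cos (d/2))) / (2 * (- sin (d/2))^2)"
    by (simp only: e1 e2 sin_minus)
  also have "(v + 1) * (-d - - sin d) + 2 * sqrt v * (2 * (- sin (d/2)) - (-d) * cos (d/2)) = - ?N" by algebra
  also have "(- sin (d/2))^2 = (sin (d/2))^2" by simp
  also have "- ?N / ?D = - (?N / ?D)" by (rule minus_divide_left[symmetric])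
  also have "?N / ?D = f_fun v d" by (simp only: f_fun_def if_not_P[OF False])
  finally show ?thesis .
qed

lemma f_cont: fixes v :: real assumes "0 < p" "q < 2*pi" shows "continuous_on {p..q} (f_fun v)"
proof -
  let ?g = "\<lambda>d. ((v + 1) * (d - sin d) + 2 * sqrt v * (2 * sin (d/2) - d * cos (d/2)))
       / (2 * (sin (d/2))^2)"
  have e: "f_fun v d = ?g d" if "d \<in> {p..q}" for d using that assms unfolding f_fun_def by auto
  have "continuous_on {p..q} ?g"
  proof (intro continuous_intros ballI)
    fix d assume "d \<in> {p..q}"
    then have "sin (d/2) > 0" using assms by (intro sin_gt_zero) auto
    then show "2 * (sin (d/2))^2 \<noteq> 0" by simp
  qed auto
  then show ?thesis by (metis (no_types, lifting) continuous_on_cong e)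
qed

lemma big: fixes x v :: real assumes "0 < x" "0 \<le> v" shows "\<exists>d. 0 < d \<and> d < 2*pi \<and> x \<le> f_fun v d"
proof -
  define b where "b = 1/(x+1)"
  have b: "0 < b" "b < 1" using assms by (auto simp: b_def)
  have b': "b < pi" "b \<le> pi/2" using b pi_gt3 by auto
  have s: "sin b > 0" using sin_gt_zero[OF b(1) b'(1)] .
  have c: "0 \<le> cos b" using b b' by (intro cos_ge_zero) auto
  have sb: "sin b \<le> b" using sin_x_le_x b by simp
  have "x \<le> 2*(x+1)^2" using assms by (simp add: power2_eq_square algebra_simps)
  also have "\<dots> = 2 / b^2" using assms by (simp add: b_def field_simps)
  also have "\<dots> \<le> 2 / (sin b)^2" using s sb by (intro divide_left_mono power_mono mult_pos_pos) auto
  also have "\<dots> \<le> (pi - b + sin b * cos b) / (sin b)^2"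
  proof (intro divide_right_mono)
    show "2 \<le> pi - b + sin b * cos b" using s c b pi_gt3 mult_nonneg_nonneg[of "sin b" "cos b"] by linarith
  qed simp
  also have "\<dots> = Aa (pi - b)" unfolding Aa_def by simp
  finally have X: "x \<le> Aa (pi - b)" .
  have A: "Aa (pi - b) > 0" using b b' by (intro Aa_pos) auto
  have B: "Ba (pi - b) > 0" using b b' by (intro Ba_pos) auto
  have "Aa (pi - b) \<le> (v+1) * Aa (pi - b)" using A assms by simp
  moreover have "2 * sqrt v * Ba (pi - b) \<ge> 0" using B assms by simp
  moreover have "f_fun v (2*pi - 2*b) = (v+1) * Aa (pi - b) + 2 * sqrt v * Ba (pi - b)"
  proof -
    have e: "(2*pi - 2*b)/2 = pi - b" by simp
    have "f_fun v (2*pi - 2*b) = (v+1) * Aa ((2*pi - 2*b)/2) + 2 * sqrt v * Ba ((2*pi - 2*b)/2)"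
      using f_d[of "2*pi - 2*b" v] b b' by simp
    then show ?thesis by (simp only: e)
  qed
  ultimately have "x \<le> f_fun v (2*pi - 2*b)" using X by linarith
  then show ?thesis using b b' by (intro exI[of _ "2*pi - 2*b"]) auto
qed


lemma key: fixes x v :: real assumes x: "0 < x" and v: "0 \<le> v"
  shows "0 < h_fun x v \<and> h_fun x v < 2*pi \<and> f_fun v (h_fun x v) \<le> x"
proof -
  define c where "c = v + sqrt v + 1"
  have c0: "c > 0" using v by (simp add: c_def add_nonneg_pos)
  have sv: "0 \<le> sqrt v" using v by simp
  show ?thesis
  proof (cases "x \<le> pi^3 / 12 * c")
    case True
    define h where "h = 12 * x / (pi^2 * c)"
    have hh: "h_fun x v = h" using True unfolding h_fun_def h_def c_def by simp
    have h0: "0 < h" using x c0 by (simp add: h_def)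
    have "h \<le> pi" unfolding h_def using True c0 pi_gt_zero
      by (simp add: field_simps power2_eq_square power3_eq_cube)
    then have a: "0 < h/2" "h/2 \<le> pi/2" using h0 by auto
    have fh: "f_fun v h = (v+1) * Aa (h/2) + 2 * sqrt v * Ba (h/2)"
      using f_d[of h v] h0 \<open>h \<le> pi\<close> pi_gt_zero by simp
    have "(v+1) * Aa (h/2) \<le> (v+1) * (pi^2*(h/2)/6)" using case1A[OF a] v by (intro mult_left_mono) auto
    moreover have "sqrt v * (2 * Ba (h/2)) \<le> sqrt v * (pi^2*(h/2)/6)" using case1B[OF a] sv by (intro mult_left_mono) auto
    ultimately have "f_fun v h \<le> c * (pi^2*(h/2)/6)" unfolding fh c_def by (simp add: algebra_simps)
    also have "\<dots> = x" unfolding h_def using c0 pi_gt_zero by (simp add: field_simps power2_eq_square)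
    finally show ?thesis using hh h0 \<open>h \<le> pi\<close> pi_gt_zero by simp
  next
    case False
    define r where "r = root 5 (pi^8 * c / (12 * x))"
    have hh: "h_fun x v = 2*pi - r" using False unfolding h_fun_def r_def c_def by simp
    have r0: "0 < r" unfolding r_def using c0 x by (intro real_root_gt_zero) auto
    have r5: "r^5 = pi^8 * c / (12 * x)" unfolding r_def using c0 x by simp
    have "pi^3 * c < 12 * x" using False by simp
    then have "pi^5 * (pi^3 * c) < pi^5 * (12 * x)" using pi_gt_zero by (intro mult_strict_left_mono) auto
    then have "pi^8 * c < pi^5 * (12 * x)" by (simp add: power_add[symmetric] mult.assoc[symmetric])
    then have "pi^8 * c / (12 * x) < pi^5" using x by (simp add: divide_less_eq)
    then have "r^5 < pi^5" using r5 by simp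
    then have rpi: "r < pi" by (rule power_less_imp_less_base) simp
    define b where "b = r/2"
    have b: "0 < b" "b \<le> pi/2" using r0 rpi by (auto simp: b_def)
    have hb: "(2*pi - r)/2 = pi - b" by (simp add: b_def)
    have fh: "f_fun v (2*pi - r) = (v+1) * Aa (pi - b) + 2 * sqrt v * Ba (pi - b)"
      using f_d[of "2*pi - r" v] r0 rpi hb by simp
    define K where "K = pi^8/(384*b^5)"
    have "(v+1) * Aa (pi - b) \<le> (v+1) * K" unfolding K_def using case2A[OF b] v by (intro mult_left_mono) auto
    moreover have "sqrt v * (2 * Ba (pi - b)) \<le> sqrt v * K" unfolding K_def using case2B[OF b] sv by (intro mult_left_mono) auto
    ultimately have "f_fun v (2*pi - r) \<le> c * K" unfolding fh c_def by (simp add: algebra_simps)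
    also have "\<dots> = c * (pi^8 / (12 * r^5))" unfolding K_def b_def by (simp add: field_simps)
    also have "\<dots> = x" unfolding r5 using c0 x pi_gt_zero by (simp add: field_simps)
    finally show ?thesis using hh r0 rpi by simp
  qed
qed

theorem lemma2p4:
  fixes x v :: real
  assumes "x > 0" and "v \<ge> 0"
  shows "delta_fun x v \<ge> h_fun x v"
proof -
  let ?h = "h_fun x v"
  have K: "0 < ?h" "?h < 2*pi" "f_fun v ?h \<le> x" using key[OF assms] by auto
  obtain d' where d': "0 < d'" "d' < 2*pi" "x \<le> f_fun v d'" using big[OF assms] by blast
  have "?h \<le> d'"
  proof (rule ccontr)
    assume "\<not> ?h \<le> d'"
    then have "f_fun v d' < f_fun v ?h" using f_mono[of v d' ?h] d' K assms by simp
    then show False using K d' by simp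
  qed
  then obtain d0 where d0: "?h \<le> d0" "d0 \<le> d'" "f_fun v d0 = x"
    using IVT'[of "f_fun v" ?h x d'] K d' f_cont[of ?h d' v] by auto
  have d0r: "0 < d0" "d0 < 2*pi" using d0 K d' by auto
  have uniq: "d = d0" if "-2*pi < d" "d < 2*pi" "f_fun v d = x" for d
  proof -
    have "0 < d"
    proof (rule ccontr)
      assume "\<not> 0 < d"
      then consider "d = 0" | "d < 0" by linarith
      then show False
      proof cases
        case 1 then show False using that assms by (simp add: f_fun_def)
      next
        case 2
        have "f_fun v (-d) > 0" using f_pos[of v "-d"] 2 that assms by simp
        then show False using f_odd[of v "-d"] that assms by simp
      qed
    qed
    show "d = d0"
    proof (rule ccontr)
      assume "d \<noteq> d0"
      then consider "d < d0" | "d0 < d" by linarith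
      then show False
        using f_mono[of v d d0] f_mono[of v d0 d] \<open>0 < d\<close> that d0 d0r assms by (cases; simp)
    qed
  qed
  have "delta_fun x v = d0" unfolding delta_fun_def
  proof (rule the_equality)
    show "-2*pi < d0 \<and> d0 < 2*pi \<and> f_fun v d0 = x" using d0r d0 pi_gt_zero by simp
  qed (use uniq in blast)
  then show ?thesis using d0 by simp
qed

end
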